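(* Let $1\le d<n$, $r=d(n-d)$, and let $t_1,\dots,t_k\in\{1,\dots,r-1\}$. If $\mathfrak C=F_{t_1}F_{t_2}\cdots F_{t_k}(\mathfrak C_{\mathrm{right}})$ is a maximal chain (in particular nonzero), then $\sigma_{\mathfrak C}=s_{t_k}s_{t_{k-1}}\cdots s_{t_1}$, and this is a reduced expression in $\mathsf S_r$.
   Context: $I(d,n)$: $d$-subsets of $\{1,\dots,n\}$ as increasing sequences, ordered by $\underline i\le\underline j$ iff $i_k\le j_k$ for all $k$. Maximal chains $\underline i_r>\cdots>\underline i_0$; chains compared lexicographically via concatenated strings $\underline i_r\cdots\underline i_0$; $\mathfrak C_{\mathrm{right}}$ the smallest. Root operators $f_{s,h}$ ($1\le h\le d$, $h\le s<n-d+h$): $f_{s,h}(i_1\cdots i_d)$ replaces $i_h=s$ by $s+1$ if $i_h=s$ and ($h=d$ or $i_{h+1}\ge s+2$), else $0$. Along a maximal chain $\underline i_t=f_{s_t,h_t}(\underline i_{t-1})$, each admissible pair occurring exactly once; $\tilde f_t:=f_{s_t,h_t}$ for $\mathfrak C_{\mathrm{right}}$; $\sigma_{\mathfrak C}\in\mathsf S_r$ is defined by: the operator from $\underline i_{t-1}$ to $\underline i_t$ in $\mathfrak C$ is $\tilde f_{\sigma_{\mathfrak C}(t)}$. For $1\le t\le r-1$, if the Bruhat interval $[\underline i_{t-1},\underline i_{t+1}]$ has 4 elements $\{\underline i_{t-1},\underline i_t,\underline i'_t,\underline i_{t+1}\}$ and $\underline i'_t>_{lex}\underline i_t$ (right peak),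 $F_t(\mathfrak C)$ is the chain with $\underline i_t$ replaced by $\underline i'_t$; otherwise $F_t(\mathfrak C)=0$, and $F_t(0)=0$. $s_t=(t,t+1)\in\mathsf S_r$. *)

theory Defs
  imports Main
begin

definition Idn :: "nat \<Rightarrow> nat \<Rightarrow> nat list set" where
  "Idn d n = {xs. length xs = d \<and> sorted_wrt (<) xs \<and> set xs \<subseteq> {1..n}}"

definition bleq :: "nat list \<Rightarrow> nat list \<Rightarrow> bool" where
  "bleq a b \<longleftrightarrow> length a = length b \<and> (\<forall>k<length a. a ! k \<le> b ! k)"

definition bless :: "nat list \<Rightarrow> nat list \<Rightarrow> bool" where
  "bless a b \<longleftrightarrow> bleq a b \<and> a \<noteq> b"

definition interval :: "nat \<Rightarrow> nat \<Rightarrow> nat list \<Rightarrow> nat list \<Rightarrow> nat list set" where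
  "interval d n a b = {x \<in> Idn d n. bleq a x \<and> bleq x b}"

text \<open>A maximal chain i_r > ... > i_0, stored as the list [i_0, ..., i_r] (c ! t = i_t):
  a strictly increasing list of elements of I(d,n) whose underlying set is a maximal
  totally ordered subset.\<close>
definition maxchain :: "nat \<Rightarrow> nat \<Rightarrow> nat list list \<Rightarrow> bool" where
  "maxchain d n c \<longleftrightarrow> c \<noteq> [] \<and> set c \<subseteq> Idn d n
     \<and> (\<forall>i. Suc i < length c \<longrightarrow> bless (c ! i) (c ! Suc i))
     \<and> (\<forall>x\<in>Idn d n. (\<forall>y\<in>set c. bleq x y \<or> bleq y x) \<longrightarrow> x \<in> set c)"

definition lexless :: "nat list \<Rightarrow> nat list \<Rightarrow> bool" where
  "lexless xs ys \<longleftrightarrow> (xs, ys) \<in> lexord {(a, b). a < b}"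

definition Cright :: "nat \<Rightarrow> nat \<Rightarrow> nat list list" where
  "Cright d n = (THE c. maxchain d n c \<and>
     (\<forall>c'. maxchain d n c' \<and> c' \<noteq> c \<longrightarrow> lexless (concat (rev c)) (concat (rev c'))))"

definition admissible :: "nat \<Rightarrow> nat \<Rightarrow> nat \<times> nat \<Rightarrow> bool" where
  "admissible d n p \<longleftrightarrow> (case p of (s, h) \<Rightarrow> 1 \<le> h \<and> h \<le> d \<and> h \<le> s \<and> s < n - d + h)"

text \<open>Root operator f_{s,h}; None plays the role of 0. Indices h are 1-based.\<close>
definition froot :: "nat \<Rightarrow> nat \<Rightarrow> nat \<Rightarrow> nat list \<Rightarrow> nat list option" where
  "froot d s h i = (if i ! (h - 1) = s \<and> (h = d \<or> i ! h \<ge> s + 2)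
                    then Some (i[h - 1 := s + 1]) else None)"

definition opof :: "nat \<Rightarrow> nat \<Rightarrow> nat list list \<Rightarrow> nat \<Rightarrow> nat \<times> nat" where
  "opof d n c t = (THE p. admissible d n p \<and> froot d (fst p) (snd p) (c ! (t - 1)) = Some (c ! t))"

definition sigma :: "nat \<Rightarrow> nat \<Rightarrow> nat list list \<Rightarrow> nat \<Rightarrow> nat" where
  "sigma d n c t = (if t \<in> {1..d * (n - d)}
      then (THE u. u \<in> {1..d * (n - d)} \<and> opof d n (Cright d n) u = opof d n c t)
      else t)"

text \<open>Operator F_t on chains-or-zero (None = 0).\<close>
definition Fop :: "nat \<Rightarrow> nat \<Rightarrow> nat \<Rightarrow> nat list list option \<Rightarrow> nat list list option" where
  "Fop d n t oc = (case oc of None \<Rightarrow> None | Some c \<Rightarrow>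
     (if 1 \<le> t \<and> t + 1 < length c then
        (let J = interval d n (c ! (t - 1)) (c ! (t + 1)) in
         if card J = 4 \<and> {c ! (t - 1), c ! t, c ! (t + 1)} \<subseteq> J then
           (let x = (THE x. x \<in> J - {c ! (t - 1), c ! t, c ! (t + 1)}) in
            if lexless (c ! t) x then Some (c[t := x]) else None)
         else None)
      else None))"

definition Fs :: "nat \<Rightarrow> nat \<Rightarrow> nat list \<Rightarrow> nat list list option \<Rightarrow> nat list list option" where
  "Fs d n ts oc = foldr (Fop d n) ts oc"

definition stp :: "nat \<Rightarrow> nat \<Rightarrow> nat" where
  "stp t = (\<lambda>x. if x = t then t + 1 else if x = t + 1 then t else x)"

text \<open>For ts = [t_1,...,t_k], the product s_{t_k} s_{t_{k-1}} ... s_{t_1} (function composition).\<close>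
definition wordprod :: "nat list \<Rightarrow> nat \<Rightarrow> nat" where
  "wordprod ts = fold (\<lambda>t acc. stp t \<circ> acc) ts id"

definition reduced :: "nat \<Rightarrow> nat list \<Rightarrow> bool" where
  "reduced r ts \<longleftrightarrow> set ts \<subseteq> {1..r - 1} \<and>
     (\<forall>us. set us \<subseteq> {1..r - 1} \<and> wordprod us = wordprod ts \<longrightarrow> length ts \<le> length us)"

end

theory Submission
  imports Defs
begin


lemma lexless_irrefl: "\<not> lexless x x"
  unfolding lexless_def by (rule lexord_irreflexive) auto

lemma lexless_trans: "lexless x y \<Longrightarrow> lexless y z \<Longrightarrow> lexless x z"
  unfolding lexless_def by (erule lexord_trans) (auto simp: trans_def)

lemma lexless_asym: "lexless x y \<Longrightarrow> \<not> lexless y x"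
  using lexless_irrefl lexless_trans by blast

lemma lexless_linear: "lexless x y \<or> x = y \<or> lexless y x"
  unfolding lexless_def by (rule lexord_linear) auto



definition inc :: "nat list \<Rightarrow> nat \<Rightarrow> nat list" where
  "inc a k = a[k := Suc (a ! k)]"

definition rk :: "nat list \<Rightarrow> nat" where
  "rk a = (\<Sum>k<length a. a ! k)"

lemma length_inc[simp]: "length (inc a k) = length a"
  by (simp add: inc_def)

lemma inc_nth: "k < length a \<Longrightarrow> inc a k ! i = (if i = k then Suc (a ! k) else a ! i)"
  by (simp add: inc_def nth_list_update)

lemma rk_update: assumes "k < length a" shows "rk (a[k := v]) + a ! k = rk a + v"
proof -
  have fin: "finite {..<length a}" by simp
  have k: "k \<in> {..<length a}" using assms by simp
  have "rk a = a ! k + (\<Sum>i\<in>{..<length a} - {k}. a ! i)"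
    unfolding rk_def using sum.remove[OF fin k] by simp
  moreover have "rk (a[k := v]) = v + (\<Sum>i\<in>{..<length a} - {k}. a[k:=v] ! i)"
    unfolding rk_def using sum.remove[OF fin k, of "\<lambda>i. a[k:=v] ! i"] assms by simp
  moreover have "(\<Sum>i\<in>{..<length a} - {k}. a[k:=v] ! i) = (\<Sum>i\<in>{..<length a} - {k}. a ! i)"
    by (rule sum.cong) auto
  ultimately show ?thesis by simp
qed

lemma rk_inc: "k < length a \<Longrightarrow> rk (inc a k) = Suc (rk a)"
  using rk_update[of k a "Suc (a!k)"] unfolding inc_def by simp

lemma bleq_refl: "bleq a a" by (simp add: bleq_def)

lemma bleq_trans: "bleq a b \<Longrightarrow> bleq b c \<Longrightarrow> bleq a c"
  unfolding bleq_def by (metis le_trans)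

lemma bleq_rk: "bleq a b \<Longrightarrow> rk a \<le> rk b"
  unfolding bleq_def rk_def by (auto intro: sum_mono)

lemma bleq_neq_ex: "bleq a b \<Longrightarrow> a \<noteq> b \<Longrightarrow> \<exists>k<length a. a ! k < b ! k"
  unfolding bleq_def by (metis le_neq_implies_less nth_equalityI)

lemma bless_rk: assumes "bless a b" shows "rk a < rk b"
proof -
  from assms obtain k where k: "k < length a" "a ! k < b ! k"
    using bleq_neq_ex unfolding bless_def by blast
  from assms have "length a = length b" "\<forall>i<length a. a ! i \<le> b ! i"
    unfolding bless_def bleq_def by auto
  then show ?thesis unfolding rk_def using k
    by (metis finite_lessThan lessThan_iff sum_strict_mono_ex1)
qed

lemma bleq_rk_eq: "bleq a b \<Longrightarrow> rk a = rk b \<Longrightarrow> a = b"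
  using bless_rk unfolding bless_def by fastforce

lemma bleq_antisym: "bleq a b \<Longrightarrow> bleq b a \<Longrightarrow> a = b"
  using bleq_rk bleq_rk_eq by (meson le_antisym)

lemma bleq_inc: "k < length a \<Longrightarrow> bleq a (inc a k)"
  by (simp add: bleq_def inc_nth)

lemma bless_inc: "k < length a \<Longrightarrow> bless a (inc a k)"
  using bleq_inc rk_inc bless_def by (metis n_not_Suc_n)

lemma bleq_rk_Suc: assumes "bleq a x" "rk x = Suc (rk a)"
  shows "\<exists>k<length a. x = inc a k"
proof -
  have "a \<noteq> x" using assms by auto
  then obtain k where k: "k < length a" "a ! k < x ! k" using bleq_neq_ex assms by blast
  have "bleq (inc a k) x" using assms(1) k unfolding bleq_def by (auto simp: inc_nth)
  moreover have "rk (inc a k) = rk x" using rk_inc k assms by simp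
  ultimately show ?thesis using bleq_rk_eq k by metis
qed



lemma Idn_iff: "a \<in> Idn d n \<longleftrightarrow> length a = d \<and> (\<forall>i. Suc i < d \<longrightarrow> a ! i < a ! Suc i)
   \<and> (\<forall>i<d. 1 \<le> a ! i \<and> a ! i \<le> n)"
proof -
  have "sorted_wrt (<) a \<longleftrightarrow> (\<forall>i. Suc i < length a \<longrightarrow> a ! i < a ! Suc i)"
    by (rule sorted_wrt_iff_nth_Suc_transp) (simp add: transp_def)
  moreover have "set a \<subseteq> {1..n} \<longleftrightarrow> (\<forall>i<length a. 1 \<le> a ! i \<and> a ! i \<le> n)"
    by (simp add: subset_code(1) all_set_conv_all_nth)
  ultimately show ?thesis unfolding Idn_def by auto
qed

lemma Idn_len: "a \<in> Idn d n \<Longrightarrow> length a = d" by (simp add: Idn_def)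

lemma Idn_gap: assumes "a \<in> Idn d n" "i \<le> j" "j < d" shows "a ! i + (j - i) \<le> a ! j"
  using assms(2,3)
proof (induction j)
  case 0 then show ?case by simp
next
  case (Suc j)
  show ?case
  proof (cases "i = Suc j")
    case True then show ?thesis by simp
  next
    case False
    then have "i \<le> j" using Suc by simp
    then have "a ! i + (j - i) \<le> a ! j" using Suc by simp
    moreover have "a ! j < a ! Suc j" using assms(1) Suc(3) unfolding Idn_iff by blast
    ultimately show ?thesis using \<open>i \<le> j\<close> by simp
  qed
qed

lemma Idn_lower: assumes "a \<in> Idn d n" "k < d" shows "Suc k \<le> a ! k"
proof -
  have "1 \<le> a ! 0" using assms unfolding Idn_iff by auto
  then show ?thesis using Idn_gap[OF assms(1), of 0 k] assms by simp
qed

lemma Idn_upper: assumes "a \<in> Idn d n" "k < d" shows "a ! k + (d - Suc k) \<le> n"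
proof -
  have "a ! (d - 1) \<le> n" using assms unfolding Idn_iff by auto
  moreover have "a ! k + (d - 1 - k) \<le> a ! (d - 1)" using Idn_gap[OF assms(1), of k "d - 1"] assms by simp
  ultimately show ?thesis by arith
qed

lemma Idn_finite: "finite (Idn d n)"
proof -
  have "Idn d n \<subseteq> {xs. set xs \<subseteq> {1..n} \<and> length xs \<le> d}" unfolding Idn_def by auto
  then show ?thesis using finite_lists_length_le[of "{1..n}" d] finite_subset by blast
qed

definition botl :: "nat \<Rightarrow> nat list" where "botl d = map Suc [0..<d]"
definition topl :: "nat \<Rightarrow> nat \<Rightarrow> nat list" where "topl d n = map (\<lambda>k. n - d + Suc k) [0..<d]"

lemma bot_Idn: "d \<le> n \<Longrightarrow> botl d \<in> Idn d n"
  unfolding Idn_iff botl_def by auto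

lemma top_Idn: "d \<le> n \<Longrightarrow> topl d n \<in> Idn d n"
  unfolding Idn_iff topl_def by auto

lemma bot_le: "a \<in> Idn d n \<Longrightarrow> bleq (botl d) a"
  unfolding bleq_def botl_def using Idn_lower Idn_len by auto

lemma top_ge: "a \<in> Idn d n \<Longrightarrow> bleq a (topl d n)"
  unfolding bleq_def topl_def using Idn_upper Idn_len by fastforce

lemma rk_top: "rk (topl d n) = rk (botl d) + d * (n - d)"
proof -
  have "rk (topl d n) = (\<Sum>k<d. (n - d) + Suc k)" unfolding rk_def topl_def by simp
  also have "\<dots> = (\<Sum>k<d. Suc k) + d * (n - d)" unfolding sum.distrib by simp
  also have "(\<Sum>k<d. Suc k) = rk (botl d)" unfolding rk_def botl_def by simp
  finally show ?thesis .
qed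

lemma inc_Idn: assumes "a \<in> Idn d n" "k < d" "Suc k < d \<Longrightarrow> Suc (a ! k) < a ! Suc k" "Suc (a ! k) \<le> n"
  shows "inc a k \<in> Idn d n"
proof -
  have l: "length (inc a k) = d" using assms(1) Idn_len by simp
  have s: "\<forall>i. Suc i < d \<longrightarrow> inc a k ! i < inc a k ! Suc i"
  proof (intro allI impI)
    fix i assume i: "Suc i < d"
    have ai: "a ! i < a ! Suc i" using assms(1) i unfolding Idn_iff by blast
    have la: "length a = d" using assms(1) Idn_len by simp
    show "inc a k ! i < inc a k ! Suc i"
    proof (cases "i = k")
      case True then show ?thesis using assms(3) i la by (simp add: inc_nth)
    next
      case False then show ?thesis using ai i la assms(2) by (cases "Suc i = k") (simp_all add: inc_nth)
    qed
  qed
  have b: "\<forall>i<d. 1 \<le> inc a k ! i \<and> inc a k ! i \<le> n"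
  proof (intro allI impI)
    fix i assume i: "i < d"
    have la: "length a = d" using assms(1) Idn_len by simp
    have "1 \<le> a ! i \<and> a ! i \<le> n" using assms(1) i unfolding Idn_iff by blast
    then show "1 \<le> inc a k ! i \<and> inc a k ! i \<le> n" using assms(2,4) i la by (simp add: inc_nth)
  qed
  show ?thesis using l s b unfolding Idn_iff by blast
qed

lemma cover_up: assumes "a \<in> Idn d n" "b \<in> Idn d n" "bless a b"
  shows "\<exists>k<d. inc a k \<in> Idn d n \<and> bleq (inc a k) b"
proof -
  have la: "length a = d" "length b = d" using assms Idn_len by auto
  define S where "S = {k. k < d \<and> a ! k < b ! k}"
  have "S \<noteq> {}" using bleq_neq_ex assms(3) la unfolding bless_def S_def by auto
  moreover have "finite S" unfolding S_def by simp
  ultimately have kS: "Max S \<in> S" by simp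
  define k where "k = Max S"
  have k: "k < d" "a ! k < b ! k" using kS unfolding k_def S_def by auto
  have mx: "\<And>j. j < d \<Longrightarrow> k < j \<Longrightarrow> a ! j = b ! j"
  proof -
    fix j assume j: "j < d" "k < j"
    have "a ! j \<le> b ! j" using assms(3) j la unfolding bless_def bleq_def by auto
    moreover have "\<not> a ! j < b ! j"
    proof
      assume "a ! j < b ! j"
      then have "j \<in> S" using j unfolding S_def by simp
      then have "j \<le> k" unfolding k_def using Max_ge[OF \<open>finite S\<close>] by simp
      then show False using j by simp
    qed
    ultimately show "a ! j = b ! j" by simp
  qed
  have "inc a k \<in> Idn d n"
  proof (rule inc_Idn[OF assms(1) k(1)])
    assume "Suc k < d"
    then have "a ! Suc k = b ! Suc k" using mx by simp
    moreover have "b ! k < b ! Suc k" using assms(2) \<open>Suc k < d\<close> unfolding Idn_iff by blast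
    ultimately show "Suc (a ! k) < a ! Suc k" using k by simp
  next
    have "b ! k \<le> n" using k assms(2) unfolding Idn_iff by blast
    then show "Suc (a ! k) \<le> n" using k by simp
  qed
  moreover have "bleq (inc a k) b" using assms(3) k la unfolding bless_def bleq_def
    by (auto simp: inc_nth)
  ultimately show ?thesis using k by blast
qed



definition cov :: "nat \<Rightarrow> nat list list \<Rightarrow> bool" where
  "cov d c \<longleftrightarrow> (\<forall>i. Suc i < length c \<longrightarrow> (\<exists>k<d. c ! Suc i = inc (c ! i) k))"

lemma cov_rk: assumes "cov d c" "set c \<subseteq> Idn d n" "i \<le> j" "j < length c"
  shows "rk (c ! j) = rk (c ! i) + (j - i)"
  using assms(3,4)
proof (induction j)
  case 0 then show ?case by simp
next
  case (Suc j)
  show ?case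
  proof (cases "i = Suc j")
    case True then show ?thesis by simp
  next
    case False
    then have ij: "i \<le> j" using Suc by simp
    obtain k where k: "k < d" "c ! Suc j = inc (c ! j) k" using assms(1) Suc(3) unfolding cov_def by blast
    have "c ! j \<in> Idn d n" using assms(2) Suc(3) by (simp add: subset_iff)
    then have "length (c ! j) = d" by (rule Idn_len)
    then have "rk (c ! Suc j) = Suc (rk (c ! j))" using k rk_inc by simp
    then show ?thesis using Suc ij by simp
  qed
qed

lemma cov_bleq: assumes "cov d c" "set c \<subseteq> Idn d n" "i \<le> j" "j < length c"
  shows "bleq (c ! i) (c ! j)"
  using assms(3,4)
proof (induction j)
  case 0 then show ?case by (simp add: bleq_refl)
next
  case (Suc j)
  show ?case
  proof (cases "i = Suc j")
    case True then show ?thesis by (simp add: bleq_refl)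
  next
    case False
    then have ij: "i \<le> j" using Suc by simp
    obtain k where k: "k < d" "c ! Suc j = inc (c ! j) k" using assms(1) Suc(3) unfolding cov_def by blast
    have "c ! j \<in> Idn d n" using assms(2) Suc(3) by (simp add: subset_iff)
    then have "length (c ! j) = d" by (rule Idn_len)
    then have "bleq (c ! j) (c ! Suc j)" using k bleq_inc by simp
    then show ?thesis using Suc ij bleq_trans by simp
  qed
qed

lemma mc_Idn: "maxchain d n c \<Longrightarrow> i < length c \<Longrightarrow> c ! i \<in> Idn d n"
  unfolding maxchain_def by (simp add: subset_iff)

lemma mc_bleq: assumes "maxchain d n c" "i \<le> j" "j < length c"
  shows "bleq (c ! i) (c ! j)"
  using assms(2,3)
proof (induction j)
  case 0 then show ?case by (simp add: bleq_refl)
next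
  case (Suc j)
  show ?case
  proof (cases "i = Suc j")
    case True then show ?thesis by (simp add: bleq_refl)
  next
    case False
    then have ij: "i \<le> j" using Suc by simp
    have "bless (c ! j) (c ! Suc j)" using assms(1) Suc(3) unfolding maxchain_def by blast
    then show ?thesis using Suc ij bleq_trans unfolding bless_def by simp
  qed
qed

lemma mc_cover: assumes mc: "maxchain d n c" and i: "Suc i < length c"
  shows "\<exists>k<d. c ! Suc i = inc (c ! i) k"
proof -
  define a where "a = c ! i"
  define b where "b = c ! Suc i"
  have aI: "a \<in> Idn d n" "b \<in> Idn d n" using mc_Idn[OF mc] i unfolding a_def b_def by auto
  have ab: "bless a b" using mc i unfolding maxchain_def a_def b_def by blast
  obtain k where k: "k < d" "inc a k \<in> Idn d n" "bleq (inc a k) b" using cover_up[OF aI ab] by blast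
  have la: "length a = d" using aI Idn_len by simp
  have "inc a k = b"
  proof (rule ccontr)
    assume ne: "inc a k \<noteq> b"
    have "\<forall>y\<in>set c. bleq (inc a k) y \<or> bleq y (inc a k)"
    proof
      fix y assume "y \<in> set c"
      then obtain j where j: "j < length c" "y = c ! j" by (auto simp: in_set_conv_nth)
      show "bleq (inc a k) y \<or> bleq y (inc a k)"
      proof (cases "j \<le> i")
        case True
        then have "bleq y a" using mc_bleq[OF mc True] i j unfolding a_def by simp
        then show ?thesis using bleq_inc[of k a] la k bleq_trans by blast
      next
        case False
        then have "bleq b y" using mc_bleq[OF mc, of "Suc i" j] i j unfolding b_def by simp
        then show ?thesis using k bleq_trans by blast
      qed
    qed
    then have "inc a k \<in> set c" using mc k unfolding maxchain_def by blast
    then obtain j where j: "j < length c" "inc a k = c ! j" by (auto simp: in_set_conv_nth)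
    show False
    proof (cases "j \<le> i")
      case True
      then have "bleq (inc a k) a" using mc_bleq[OF mc True] i j unfolding a_def by simp
      then show False using bless_inc[of k a] la k bleq_rk bless_rk by fastforce
    next
      case False
      then have "bleq b (inc a k)" using mc_bleq[OF mc, of "Suc i" j] i j unfolding b_def by simp
      then show False using k ne bleq_antisym by blast
    qed
  qed
  then show ?thesis using k(1) unfolding a_def b_def by metis
qed

lemma mc_cov: "maxchain d n c \<Longrightarrow> cov d c"
  unfolding cov_def using mc_cover by blast

lemma mc_set: "maxchain d n c \<Longrightarrow> set c \<subseteq> Idn d n"
  unfolding maxchain_def by blast

lemma mc_len: assumes mc: "maxchain d n c" and dn: "d \<le> n"
  shows "length c = Suc (d * (n - d))"
proof -
  have cv: "cov d c" and st: "set c \<subseteq> Idn d n" using mc mc_cov mc_set by auto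
  have "botl d \<in> set c" using mc bot_Idn[OF dn] bot_le unfolding maxchain_def by (meson subsetD)
  then obtain i where i: "i < length c" "c ! i = botl d" by (auto simp: in_set_conv_nth)
  have "topl d n \<in> set c" using mc top_Idn[OF dn] top_ge unfolding maxchain_def by (meson subsetD)
  then obtain j where j: "j < length c" "c ! j = topl d n" by (auto simp: in_set_conv_nth)
  have ij: "i \<le> j"
  proof (rule ccontr)
    assume "\<not> i \<le> j"
    then have "rk (c ! i) = rk (c ! j) + (i - j)" using cov_rk[OF cv st, of j i] i by simp
    then show False using i j rk_top[of d n] \<open>\<not> i \<le> j\<close> by simp
  qed
  have "rk (c ! j) = rk (c ! i) + (j - i)" using cov_rk[OF cv st ij] j by simp
  then have "j - i = d * (n - d)" using i j rk_top[of d n] by simp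
  then have ge: "Suc (d * (n - d)) \<le> length c" using j by simp
  have "c \<noteq> []" using mc unfolding maxchain_def by simp
  then have l0: "0 < length c" by simp
  have "rk (c ! (length c - 1)) = rk (c ! 0) + (length c - 1)" using cov_rk[OF cv st, of 0 "length c - 1"] l0 by simp
  moreover have "rk (botl d) \<le> rk (c ! 0)" using bot_le bleq_rk mc_Idn[OF mc l0] by blast
  moreover have "rk (c ! (length c - 1)) \<le> rk (topl d n)" using top_ge bleq_rk mc_Idn[OF mc, of "length c - 1"] l0 by simp
  ultimately have "length c - 1 \<le> d * (n - d)" using rk_top[of d n] by simp
  then show ?thesis using ge by simp
qed

lemma chain_to_top: assumes dn: "d \<le> n"
  shows "a \<in> Idn d n \<Longrightarrow> \<exists>c. c \<noteq> [] \<and> c ! 0 = a \<and> set c \<subseteq> Idn d n \<and> cov d c \<and> last c = topl d n"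
proof (induction "rk (topl d n) - rk a" arbitrary: a rule: less_induct)
  case less
  show ?case
  proof (cases "a = topl d n")
    case True
    then show ?thesis using less.prems by (intro exI[of _ "[a]"]) (simp add: cov_def)
  next
    case False
    then have "bless a (topl d n)" using top_ge less.prems unfolding bless_def by simp
    then obtain k where k: "k < d" "inc a k \<in> Idn d n" "bleq (inc a k) (topl d n)"
      using cover_up[OF less.prems top_Idn[OF dn]] by blast
    have la: "length a = d" using less.prems Idn_len by simp
    have "rk (inc a k) \<le> rk (topl d n)" using k bleq_rk by simp
    then have "rk (topl d n) - rk (inc a k) < rk (topl d n) - rk a" using rk_inc[of k a] la k by simp
    then obtain c where c: "c \<noteq> []" "c ! 0 = inc a k" "set c \<subseteq> Idn d n" "cov d c" "last c = topl d n"
      using less.hyps k by blast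
    have "cov d (a # c)" unfolding cov_def
    proof (intro allI impI)
      fix i assume "Suc i < length (a # c)"
      then show "\<exists>k<d. (a # c) ! Suc i = inc ((a # c) ! i) k"
        using c(2,4) k(1) unfolding cov_def by (cases i) auto
    qed
    then show ?thesis using c less.prems by (intro exI[of _ "a # c"]) auto
  qed
qed

lemma cov_maxchain: assumes dn: "d \<le> n" and c: "c \<noteq> []" "c ! 0 = botl d" "set c \<subseteq> Idn d n" "cov d c" "last c = topl d n"
  shows "maxchain d n c"
proof -
  have l0: "0 < length c" using c by simp
  have lastc: "c ! (length c - 1) = topl d n" using c by (simp add: last_conv_nth)
  have rkc: "\<And>j. j < length c \<Longrightarrow> rk (c ! j) = rk (botl d) + j" using cov_rk[OF c(4) c(3), of 0] c(2) by simp
  have len: "length c - 1 = d * (n - d)" using rkc[of "length c - 1"] lastc rk_top[of d n] l0 by simp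
  have "\<forall>i. Suc i < length c \<longrightarrow> bless (c ! i) (c ! Suc i)"
  proof (intro allI impI)
    fix i assume i: "Suc i < length c"
    then obtain k where k: "k < d" "c ! Suc i = inc (c ! i) k" using c(4) unfolding cov_def by blast
    have "c ! i \<in> Idn d n" using c(3) i by (simp add: subset_iff)
    then have "length (c ! i) = d" by (rule Idn_len)
    then show "bless (c ! i) (c ! Suc i)" using k bless_inc by simp
  qed
  moreover have "\<forall>x\<in>Idn d n. (\<forall>y\<in>set c. bleq x y \<or> bleq y x) \<longrightarrow> x \<in> set c"
  proof (intro ballI impI)
    fix x assume x: "x \<in> Idn d n" and cmp: "\<forall>y\<in>set c. bleq x y \<or> bleq y x"
    have "rk (botl d) \<le> rk x" "rk x \<le> rk (topl d n)" using bot_le top_ge x bleq_rk by auto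
    then obtain m where m: "rk x = rk (botl d) + m" "m \<le> d * (n - d)" using rk_top[of d n]
      by (metis add.commute le_add_diff_inverse le_diff_conv)
    have ml: "m < length c" using m len l0 by linarith
    have "bleq x (c ! m) \<or> bleq (c ! m) x" using cmp ml by simp
    then have "x = c ! m" using rkc[OF ml] m bleq_rk_eq by metis
    then show "x \<in> set c" using ml by simp
  qed
  ultimately show ?thesis unfolding maxchain_def using c by blast
qed

lemma maxchain_exists: assumes "d \<le> n" shows "\<exists>c. maxchain d n c"
  using chain_to_top[OF assms bot_Idn[OF assms]] cov_maxchain[OF assms] by blast



lemma concat_inj: "\<forall>x\<in>set xs. length x = d \<Longrightarrow> \<forall>y\<in>set ys. length y = d \<Longrightarrow> length xs = length ys
  \<Longrightarrow> concat xs = concat ys \<Longrightarrow> xs = ys"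
proof (induction xs arbitrary: ys)
  case Nil then show ?case by simp
next
  case (Cons x xs)
  obtain y ys' where ys: "ys = y # ys'" using Cons.prems(3) by (cases ys) auto
  have e: "x @ concat xs = y @ concat ys'" using Cons.prems(4) ys by simp
  have "length x = length y" using Cons.prems(1,2) ys by simp
  then have xy: "x = y" "concat xs = concat ys'" using e by simp_all
  have "xs = ys'" 
    by (rule Cons.IH) (use Cons.prems ys xy in simp_all)
  then show ?case using ys xy by simp
qed

lemma finite_min_lex: "finite S \<Longrightarrow> S \<noteq> {} \<Longrightarrow> inj_on K S \<Longrightarrow>
   \<exists>x\<in>S. \<forall>y\<in>S. y \<noteq> x \<longrightarrow> lexless (K x) (K y)"
proof (induction S rule: finite_ne_induct)
  case (singleton x) then show ?case by simp
next
  case (insert x F)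
  then obtain m where m: "m \<in> F" "\<forall>y\<in>F. y \<noteq> m \<longrightarrow> lexless (K m) (K y)" by auto
  have "x \<noteq> m" using insert m by auto
  then have "K x \<noteq> K m" using insert.prems m by (meson inj_on_contraD insertCI)
  then consider "lexless (K x) (K m)" | "lexless (K m) (K x)" using lexless_linear by blast
  then show ?case
  proof cases
    case 1
    have "\<forall>y\<in>insert x F. y \<noteq> x \<longrightarrow> lexless (K x) (K y)"
    proof (intro ballI impI)
      fix y assume "y \<in> insert x F" "y \<noteq> x"
      then have "y \<in> F" by simp
      then show "lexless (K x) (K y)" using m 1 lexless_trans[of "K x" "K m" "K y"] by (cases "y = m") auto
    qed
    then show ?thesis by blast
  next
    case 2
    then show ?thesis using m by (intro bexI[of _ m]) auto
  qed
qed

lemma maxchains_finite: assumes "d \<le> n" shows "finite {c. maxchain d n c}"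
proof -
  have "{c. maxchain d n c} \<subseteq> {c. set c \<subseteq> Idn d n \<and> length c \<le> Suc (d * (n - d))}"
    using mc_set mc_len[OF _ assms] by auto
  then show ?thesis using finite_lists_length_le[OF Idn_finite] finite_subset by blast
qed

lemma Cright_spec: assumes "d \<le> n"
  shows "maxchain d n (Cright d n) \<and>
     (\<forall>c'. maxchain d n c' \<and> c' \<noteq> Cright d n \<longrightarrow> lexless (concat (rev (Cright d n))) (concat (rev c')))"
proof -
  let ?S = "{c. maxchain d n c}"
  let ?K = "\<lambda>c. concat (rev c)"
  have inj: "inj_on ?K ?S"
  proof (rule inj_onI)
    fix x y assume x: "x \<in> ?S" and y: "y \<in> ?S" and e: "?K x = ?K y"
    have "set x \<subseteq> Idn d n" using x by (simp add: mc_set)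
    then have "\<forall>z\<in>set (rev x). length z = d" using Idn_len by auto
    moreover have "set y \<subseteq> Idn d n" using y by (simp add: mc_set)
    then have "\<forall>z\<in>set (rev y). length z = d" using Idn_len by auto
    moreover have "length (rev x) = length (rev y)" using mc_len[OF _ assms] x y by simp
    ultimately have "rev x = rev y" using concat_inj e by metis
    then show "x = y" by simp
  qed
  have ne: "?S \<noteq> {}" using maxchain_exists[OF assms] by auto
  obtain c where c: "c \<in> ?S" "\<forall>y\<in>?S. y \<noteq> c \<longrightarrow> lexless (?K c) (?K y)"
    using finite_min_lex[OF maxchains_finite[OF assms] ne inj] by blast
  have "maxchain d n (Cright d n) \<and>
     (\<forall>c'. maxchain d n c' \<and> c' \<noteq> (Cright d n) \<longrightarrow> lexless (?K (Cright d n)) (?K c'))"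
    unfolding Cright_def
  proof (rule theI[of _ c])
    show "maxchain d n c \<and> (\<forall>c'. maxchain d n c' \<and> c' \<noteq> c \<longrightarrow> lexless (?K c) (?K c'))" using c by auto
  next
    fix x assume x: "maxchain d n x \<and> (\<forall>c'. maxchain d n c' \<and> c' \<noteq> x \<longrightarrow> lexless (?K x) (?K c'))"
    show "x = c"
    proof (rule ccontr)
      assume "x \<noteq> c"
      then show False using x c lexless_asym by auto
    qed
  qed
  then show ?thesis .
qed

lemma opof_inc: assumes a: "a \<in> Idn d n" and k: "k < d" and ai: "inc a k \<in> Idn d n"
  and c1: "c ! (t - 1) = a" and c2: "c ! t = inc a k"
  shows "opof d n c t = (a ! k, Suc k)"
  unfolding opof_def c1 c2
proof (rule the_equality)
  have la: "length a = d" using a Idn_len by simp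
  have "Suc k \<le> a ! k" using Idn_lower[OF a k] .
  moreover have "inc a k ! k + (d - Suc k) \<le> n" using Idn_upper[OF ai k] .
  then have "Suc (a ! k) + (d - Suc k) \<le> n" using k la by (simp add: inc_nth)
  then have "a ! k < n - d + Suc k" using k by arith
  ultimately have "admissible d n (a ! k, Suc k)" unfolding admissible_def using k by simp
  moreover have "Suc k = d \<or> a ! k + 2 \<le> a ! Suc k"
  proof (cases "Suc k < d")
    case True
    then have "inc a k ! k < inc a k ! Suc k" using ai unfolding Idn_iff by blast
    then show ?thesis using True la by (simp add: inc_nth)
  next
    case False then show ?thesis using k by simp
  qed
  ultimately show "admissible d n (a ! k, Suc k) \<and> froot d (fst (a ! k, Suc k)) (snd (a ! k, Suc k)) a = Some (inc a k)"
    unfolding froot_def inc_def by simp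
next
  fix p assume p: "admissible d n p \<and> froot d (fst p) (snd p) a = Some (inc a k)"
  obtain s h where sh: "p = (s, h)" by (cases p)
  have la: "length a = d" using a Idn_len by simp
  have h: "1 \<le> h" "h \<le> d" using p sh unfolding admissible_def by auto
  have fr: "a ! (h - 1) = s" "a[h - 1 := s + 1] = inc a k"
    using p sh unfolding froot_def by (auto split: if_splits)
  have "h - 1 = k"
  proof (rule ccontr)
    assume ne: "h - 1 \<noteq> k"
    have "a[h - 1 := s + 1] ! k = a ! k" using ne by simp
    moreover have "inc a k ! k = Suc (a ! k)" using k la by (simp add: inc_nth)
    ultimately show False using fr by simp
  qed
  then show "p = (a ! k, Suc k)" using sh fr h by auto
qed



lemma lex_inc1: assumes "h' < h" "h < length a" shows "lexless (inc a h) (inc a h')"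
  unfolding lexless_def lexord_take_index_conv
proof (rule disjI2, rule exI[of _ h'], intro conjI)
  show "h' < min (length (inc a h)) (length (inc a h'))" using assms by simp
  show "take h' (inc a h) = take h' (inc a h')" using assms unfolding inc_def by simp
  show "(inc a h ! h', inc a h' ! h') \<in> {(a, b). a < b}" using assms by (simp add: inc_nth)
qed

lemma lex_inc2: assumes "h \<noteq> h'" "h < length a" "h' < length a" "lexless (inc a h) (inc a h')"
  shows "h' < h"
proof (rule ccontr)
  assume "\<not> h' < h"
  then have "h < h'" using assms by simp
  then have "lexless (inc a h') (inc a h)" using lex_inc1 assms by simp
  then show False using assms(4) lexless_asym by blast
qed

lemma inc_comm: "h \<noteq> h' \<Longrightarrow> inc (inc a h) h' = inc (inc a h') h"
  unfolding inc_def by (cases "h < length a"; cases "h' < length a") (auto simp: list_update_swap)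

lemma mc_replace: assumes mc: "maxchain d n c" and t: "1 \<le> t" "Suc t < length c"
  and x: "x \<in> Idn d n" "bless (c ! (t - 1)) x" "bless x (c ! Suc t)"
  shows "maxchain d n (c[t := x])"
proof -
  let ?c = "c[t := x]"
  have cv: "cov d c" and st: "set c \<subseteq> Idn d n" using mc mc_cov mc_set by auto
  define R where "R = rk (c ! (t - 1))"
  have rt: "rk (c ! t) = Suc R" using cov_rk[OF cv st, of "t - 1" t] t unfolding R_def by simp
  have rt2: "rk (c ! Suc t) = Suc (Suc R)" using cov_rk[OF cv st, of "t - 1" "Suc t"] t unfolding R_def by simp
  have rx: "rk x = Suc R" using bless_rk[OF x(2)] bless_rk[OF x(3)] rt2 unfolding R_def by simp
  have ne: "?c \<noteq> []" using t by auto
  have sc: "set ?c \<subseteq> Idn d n" using st x(1) by (metis insert_subset set_update_subset_insert subset_trans)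
  have cons: "\<forall>i. Suc i < length ?c \<longrightarrow> bless (?c ! i) (?c ! Suc i)"
  proof (intro allI impI)
    fix i assume i: "Suc i < length ?c"
    have ci: "bless (c ! i) (c ! Suc i)" using mc i unfolding maxchain_def by simp
    show "bless (?c ! i) (?c ! Suc i)"
    proof (cases "i = t - 1")
      case True then show ?thesis using t x by simp
    next
      case False
      show ?thesis
      proof (cases "i = t")
        case True then show ?thesis using t x by simp
      next
        case False2: False
        then have "Suc i \<noteq> t" using False t by auto
        then show ?thesis using False2 ci by simp
      qed
    qed
  qed
  have max: "\<forall>y\<in>Idn d n. (\<forall>z\<in>set ?c. bleq y z \<or> bleq z y) \<longrightarrow> y \<in> set ?c"
  proof (intro ballI impI)
    fix y assume y: "y \<in> Idn d n" and cmp: "\<forall>z\<in>set ?c. bleq y z \<or> bleq z y"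
    show "y \<in> set ?c"
    proof (rule ccontr)
      assume nin: "y \<notin> set ?c"
      have xin: "x \<in> set ?c" using t by (simp add: set_update_memI)
      have yx: "y \<noteq> x" using nin xin by auto
      have inc': "\<And>j. j < length c \<Longrightarrow> j \<noteq> t \<Longrightarrow> c ! j \<in> set ?c"
        by (metis length_list_update nth_list_update_neq nth_mem)
      have m1: "c ! (t - 1) \<in> set ?c" using inc' t by simp
      have m2: "c ! Suc t \<in> set ?c" using inc' t by simp
      have bt1: "bleq (c ! (t - 1)) (c ! t)" and bt2: "bleq (c ! t) (c ! Suc t)"
        using mc_bleq[OF mc] t by auto
      have cmpt: "bleq y (c ! t) \<or> bleq (c ! t) y"
      proof -
        have A: "bleq y (c ! (t - 1)) \<or> bleq (c ! (t - 1)) y" using cmp m1 by blast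
        have B: "bleq y (c ! Suc t) \<or> bleq (c ! Suc t) y" using cmp m2 by blast
        show ?thesis
        proof (cases "bleq y (c ! (t - 1))")
          case True then show ?thesis using bt1 bleq_trans by blast
        next
          case F1: False
          show ?thesis
          proof (cases "bleq (c ! Suc t) y")
            case True then show ?thesis using bt2 bleq_trans by blast
          next
            case F2: False
            have l: "bleq (c ! (t - 1)) y" and u: "bleq y (c ! Suc t)" using A B F1 F2 by auto
            have "R \<le> rk y" "rk y \<le> Suc (Suc R)" using bleq_rk[OF l] bleq_rk[OF u] rt2 unfolding R_def by auto
            then consider "rk y = R" | "rk y = Suc R" | "rk y = Suc (Suc R)" by linarith
            then show ?thesis
            proof cases
              case 1 then have "y = c ! (t - 1)" using bleq_rk_eq[OF l] unfolding R_def by simp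
              then show ?thesis using bt1 by simp
            next
              case 2
              have "bleq y x \<or> bleq x y" using cmp xin by blast
              then have "y = x" using 2 rx bleq_rk_eq by metis
              then show ?thesis using yx by simp
            next
              case 3 then have "y = c ! Suc t" using bleq_rk_eq[OF u] rt2 by simp
              then show ?thesis using bt2 by simp
            qed
          qed
        qed
      qed
      have "\<forall>z\<in>set c. bleq y z \<or> bleq z y"
      proof
        fix z assume "z \<in> set c"
        then obtain j where j: "j < length c" "z = c ! j" by (auto simp: in_set_conv_nth)
        show "bleq y z \<or> bleq z y"
        proof (cases "j = t")
          case True then show ?thesis using cmpt j by simp
        next
          case False then show ?thesis using cmp inc' j by blast
        qed
      qed
      then have "y \<in> set c" using mc y unfolding maxchain_def by blast
      then obtain j where j: "j < length c" "y = c ! j" by (auto simp: in_set_conv_nth)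
      show False
      proof (cases "j = t")
        case True
        have "bleq y x \<or> bleq x y" using cmp xin by blast
        then have "y = x" using True j rt rx bleq_rk_eq by metis
        then show False using yx by simp
      next
        case False then show False using inc' j nin by simp
      qed
    qed
  qed
  show ?thesis unfolding maxchain_def using ne sc cons max by blast
qed



lemma step_data: assumes mc: "maxchain d n C" and t: "1 \<le> t" "Suc t < length C"
  shows "\<exists>h h'. h < d \<and> h' < d \<and> C ! t = inc (C ! (t - 1)) h \<and> C ! Suc t = inc (C ! t) h'
     \<and> opof d n C t = (C ! (t - 1) ! h, Suc h) \<and> opof d n C (Suc t) = (C ! t ! h', Suc h')"
proof -
  obtain h where h: "h < d" "C ! Suc (t - 1) = inc (C ! (t - 1)) h" using mc_cover[OF mc, of "t - 1"] t by auto
  obtain h' where h': "h' < d" "C ! Suc t = inc (C ! t) h'" using mc_cover[OF mc, of t] t by auto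
  have st: "Suc (t - 1) = t" using t by simp
  have I: "C ! (t - 1) \<in> Idn d n" "C ! t \<in> Idn d n" "C ! Suc t \<in> Idn d n" using mc_Idn[OF mc] t by auto
  have o1: "opof d n C t = (C ! (t - 1) ! h, Suc h)"
    using opof_inc[OF I(1) h(1), of C t] h(2) I(2) st by simp
  have o2: "opof d n C (Suc t) = (C ! t ! h', Suc h')"
    using opof_inc[OF I(2) h'(1), of C "Suc t"] h'(2) I(3) by simp
  show ?thesis using h h' o1 o2 st by auto
qed

lemma opof_upd_other: "u \<noteq> t \<Longrightarrow> u \<noteq> Suc t \<Longrightarrow> 1 \<le> t \<Longrightarrow> opof d n (C[t := x]) u = opof d n C u"
proof -
  assume a: "u \<noteq> t" "u \<noteq> Suc t" "1 \<le> t"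
  then have "u - 1 \<noteq> t" by auto
  then show ?thesis unfolding opof_def using a by simp
qed

lemma Fop_step: assumes mc: "maxchain d n C" and F: "Fop d n t (Some C) = Some C'"
  shows "1 \<le> t \<and> Suc t < length C \<and> maxchain d n C' \<and> opof d n C' t = opof d n C (Suc t)
    \<and> opof d n C' (Suc t) = opof d n C t \<and> (\<forall>u. u \<noteq> t \<longrightarrow> u \<noteq> Suc t \<longrightarrow> opof d n C' u = opof d n C u)
    \<and> snd (opof d n C (Suc t)) < snd (opof d n C t)"
proof -
  define a where "a = C ! (t - 1)"
  define b where "b = C ! t"
  define e where "e = C ! (t + 1)"
  define J where "J = interval d n a e"
  define x where "x = (THE x. x \<in> J - {a, b, e})"
  have t: "1 \<le> t" "Suc t < length C" and cJ: "card J = 4" and sub: "{a, b, e} \<subseteq> J"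
    and lx: "lexless b x" and C': "C' = C[t := x]"
    using F unfolding Fop_def Let_def a_def b_def e_def J_def x_def by (auto split: if_splits)
  obtain h h' where hh: "h < d" "h' < d" "b = inc a h" "e = inc b h'"
      "opof d n C t = (a ! h, Suc h)" "opof d n C (Suc t) = (b ! h', Suc h')"
    using step_data[OF mc t] unfolding a_def b_def e_def by auto
  have I: "a \<in> Idn d n" "b \<in> Idn d n" "e \<in> Idn d n" using mc_Idn[OF mc] t unfolding a_def b_def e_def by auto
  have la: "length a = d" using I Idn_len by simp
  have ab: "bless a b" "bless b e" using hh la bless_inc by auto
  have dist: "a \<noteq> b" "b \<noteq> e" "a \<noteq> e" using ab bless_rk by (auto simp: bless_def) (metis ab bless_rk less_asym)
  have finJ: "finite J" unfolding J_def interval_def using Idn_finite by simp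
  have "card {a, b, e} = 3" using dist by simp
  then have "card (J - {a, b, e}) = 1" using card_Diff_subset[OF _ sub] cJ by simp
  then obtain z where z: "J - {a, b, e} = {z}" by (meson card_1_singletonE)
  have xz: "x = z" unfolding x_def z by simp
  have xJ: "x \<in> Idn d n" "bleq a x" "bleq x e" "x \<noteq> a" "x \<noteq> b" "x \<noteq> e"
    using z xz unfolding J_def interval_def by auto
  have bax: "bless a x" "bless x e" using xJ unfolding bless_def by auto
  have re: "rk e = Suc (Suc (rk a))" using hh la rk_inc by simp
  have "rk x = Suc (rk a)" using bless_rk[OF bax(1)] bless_rk[OF bax(2)] re by simp
  then obtain k where k: "k < length a" "x = inc a k" using bleq_rk_Suc[OF xJ(2)] by blast
  have kh: "k \<noteq> h" using k hh xJ by auto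
  have kh': "k = h'"
  proof (rule ccontr)
    assume "k \<noteq> h'"
    then have "e ! k = a ! k" using hh kh la by (simp add: inc_nth)
    moreover have "x ! k = Suc (a ! k)" using k by (simp add: inc_nth)
    moreover have "x ! k \<le> e ! k" using xJ(3) k unfolding bleq_def by simp
    ultimately show False by simp
  qed
  have hne: "h \<noteq> h'" using kh kh' by simp
  have lx': "lexless (inc a h) (inc a h')" using lx hh k kh' by simp
  have lt: "h' < h" using lex_inc2[OF hne _ _ lx'] hh la by simp
  have eq: "e = inc x h" using hh k kh' inc_comm[OF hne] by simp
  have mc': "maxchain d n C'" unfolding C' using mc_replace[OF mc t xJ(1)] bax unfolding a_def e_def by simp
  have C't1: "C' ! (t - 1) = a" "C' ! t = x" "C' ! Suc t = e" using t unfolding C' a_def e_def by auto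
  have o1: "opof d n C' t = (a ! h', Suc h')"
    using opof_inc[OF I(1) hh(2), of C' t] C't1 k kh' xJ(1) by simp
  have o2: "opof d n C' (Suc t) = (x ! h, Suc h)"
    using opof_inc[OF xJ(1) hh(1), of C' "Suc t"] C't1 eq I(3) by simp
  have "b ! h' = a ! h'" "x ! h = a ! h" using hh k kh' hne la by (auto simp: inc_nth)
  then have "opof d n C' t = opof d n C (Suc t)" "opof d n C' (Suc t) = opof d n C t" using o1 o2 hh by auto
  moreover have "\<forall>u. u \<noteq> t \<longrightarrow> u \<noteq> Suc t \<longrightarrow> opof d n C' u = opof d n C u"
    using opof_upd_other t unfolding C' by blast
  ultimately show ?thesis using t mc' lt hh by simp
qed



lemma opof_mc: assumes mc: "maxchain d n C" and u: "1 \<le> u" "u < length C"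
  shows "\<exists>k<d. C ! u = inc (C ! (u - 1)) k \<and> opof d n C u = (C ! (u - 1) ! k, Suc k)"
proof -
  have st: "Suc (u - 1) = u" using u by simp
  obtain k where k: "k < d" "C ! u = inc (C ! (u - 1)) k" using mc_cover[OF mc, of "u - 1"] u st by auto
  have I: "C ! (u - 1) \<in> Idn d n" "C ! u \<in> Idn d n" using mc_Idn[OF mc] u by auto
  show ?thesis using opof_inc[OF I(1) k(1), of C u] k I by auto
qed

lemma mc_opof_inj: assumes mc: "maxchain d n C" and u: "1 \<le> u" "u < u'" "u' < length C"
  shows "opof d n C u \<noteq> opof d n C u'"
proof
  assume eq: "opof d n C u = opof d n C u'"
  obtain k where k: "k < d" "C ! u = inc (C ! (u - 1)) k" "opof d n C u = (C ! (u - 1) ! k, Suc k)"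
    using opof_mc[OF mc, of u] u by auto
  obtain k' where k': "k' < d" "C ! u' = inc (C ! (u' - 1)) k'" "opof d n C u' = (C ! (u' - 1) ! k', Suc k')"
    using opof_mc[OF mc, of u'] u by auto
  have kk: "k = k'" "C ! (u - 1) ! k = C ! (u' - 1) ! k" using eq k k' by auto
  have "C ! (u - 1) \<in> Idn d n" using mc_Idn[OF mc, of "u - 1"] u by simp
  then have ld: "length (C ! (u - 1)) = d" by (rule Idn_len)
  have "bleq (C ! u) (C ! (u' - 1))" using mc_bleq[OF mc, of u "u' - 1"] u by simp
  then have "C ! u ! k \<le> C ! (u' - 1) ! k" using k ld unfolding bleq_def by simp
  moreover have "C ! u ! k = Suc (C ! (u - 1) ! k)" using k ld by (simp add: inc_nth)
  ultimately show False using kk by simp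
qed

lemma concat_rev_upd: "t < length C \<Longrightarrow> \<exists>P Q. concat (rev C) = P @ C ! t @ Q \<and> concat (rev (C[t := x])) = P @ x @ Q"
proof -
  assume t: "t < length C"
  have C1: "C = take t C @ C ! t # drop (Suc t) C" using id_take_nth_drop[OF t] .
  have C2: "C[t := x] = take t C @ x # drop (Suc t) C" using upd_conv_take_nth_drop[OF t] .
  show ?thesis
    by (rule exI[of _ "concat (rev (drop (Suc t) C))"], rule exI[of _ "concat (rev (take t C))"])
       (subst C2, subst (1) C1, simp)
qed

context
  fixes d n :: nat
  assumes dn: "1 \<le> d" "d < n"
begin

lemma Cr_mc: "maxchain d n (Cright d n)" using Cright_spec dn by simp

lemma Cr_len: "length (Cright d n) = Suc (d * (n - d))" using mc_len[OF Cr_mc] dn by simp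

lemma Cr_local: assumes t: "1 \<le> t" "Suc t < length (Cright d n)"
  shows "snd (opof d n (Cright d n) (Suc t)) \<le> snd (opof d n (Cright d n) t)"
proof (rule ccontr)
  let ?C = "Cright d n"
  assume nt: "\<not> snd (opof d n (Cright d n) (Suc t)) \<le> snd (opof d n (Cright d n) t)"
  obtain h h' where hh: "h < d" "h' < d" "?C ! t = inc (?C ! (t - 1)) h" "?C ! Suc t = inc (?C ! t) h'"
     "opof d n ?C t = (?C ! (t - 1) ! h, Suc h)" "opof d n ?C (Suc t) = (?C ! t ! h', Suc h')"
    using step_data[OF Cr_mc t] by blast
  have lt: "h < h'" using hh nt by simp
  define a where "a = ?C ! (t - 1)"
  define e where "e = ?C ! Suc t"
  have I: "a \<in> Idn d n" "e \<in> Idn d n" using mc_Idn[OF Cr_mc] t unfolding a_def e_def by auto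
  have la: "length a = d" using I Idn_len by simp
  have e: "e = inc (inc a h) h'" using hh unfolding a_def e_def by simp
  have ex: "e ! h' = Suc (a ! h')" using e lt la hh by (simp add: inc_nth)
  have xI: "inc a h' \<in> Idn d n"
  proof (rule inc_Idn[OF I(1) hh(2)])
    assume s: "Suc h' < d"
    have "e ! h' < e ! Suc h'" using I(2) s unfolding Idn_iff by blast
    moreover have "e ! Suc h' = a ! Suc h'" using e lt la s by (simp add: inc_nth)
    ultimately show "Suc (a ! h') < a ! Suc h'" using ex by simp
  next
    have "e ! h' \<le> n" using I(2) hh(2) unfolding Idn_iff by blast
    then show "Suc (a ! h') \<le> n" using ex by simp
  qed
  have e2: "e = inc (inc a h') h" using e inc_comm lt by simp
  have bax: "bless a (inc a h')" "bless (inc a h') e" using bless_inc la hh e2 by auto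
  have mc': "maxchain d n (?C[t := inc a h'])"
    using mc_replace[OF Cr_mc t xI] bax unfolding a_def e_def by simp
  have ne: "inc a h' \<noteq> ?C ! t"
  proof
    assume "inc a h' = ?C ! t"
    then have "inc a h' ! h = inc a h ! h" using hh unfolding a_def by simp
    then show False using lt la hh by (simp add: inc_nth)
  qed
  have neC: "?C[t := inc a h'] \<noteq> ?C"
  proof
    assume "?C[t := inc a h'] = ?C"
    then have "?C[t := inc a h'] ! t = ?C ! t" by simp
    then show False using ne t by simp
  qed
  have l1: "lexless (inc a h') (?C ! t)" using lex_inc1[OF lt] la hh unfolding a_def by simp
  obtain P Q where PQ: "concat (rev ?C) = P @ ?C ! t @ Q" "concat (rev (?C[t := inc a h'])) = P @ inc a h' @ Q"
    using concat_rev_upd[of t ?C "inc a h'"] t by auto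
  have "lexless (concat (rev (?C[t := inc a h']))) (concat (rev ?C))"
    unfolding PQ lexless_def
    apply (rule lexord_append_leftI)
    apply (rule lexord_sufI)
    using l1 hh la unfolding lexless_def a_def by auto
  moreover have "lexless (concat (rev ?C)) (concat (rev (?C[t := inc a h'])))"
    using Cright_spec[of d n] dn mc' neC by auto
  ultimately show False using lexless_asym by blast
qed

lemma Cr_mono: assumes "1 \<le> u" "u \<le> u'" "u' \<le> d * (n - d)"
  shows "snd (opof d n (Cright d n) u') \<le> snd (opof d n (Cright d n) u)"
  using assms(2,3)
proof (induction u')
  case 0 then show ?case by simp
next
  case (Suc u')
  show ?case
  proof (cases "u = Suc u'")
    case True then show ?thesis by simp
  next
    case False
    then have "u \<le> u'" using Suc by simp
    then have "snd (opof d n (Cright d n) u') \<le> snd (opof d n (Cright d n) u)" using Suc by simp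
    moreover have "snd (opof d n (Cright d n) (Suc u')) \<le> snd (opof d n (Cright d n) u')"
      using Cr_local[of u'] Suc.prems assms(1) \<open>u \<le> u'\<close> Cr_len by simp
    ultimately show ?thesis by simp
  qed
qed

lemma Cr_inj: assumes "u \<in> {1..d * (n - d)}" "u' \<in> {1..d * (n - d)}"
  "opof d n (Cright d n) u = opof d n (Cright d n) u'" shows "u = u'"
  using mc_opof_inj[OF Cr_mc, of u u'] mc_opof_inj[OF Cr_mc, of u' u] assms Cr_len
  by (metis atLeastAtMost_iff le_imp_less_Suc linorder_neqE_nat)

end



definition Pinv :: "nat \<Rightarrow> (nat \<Rightarrow> nat) \<Rightarrow> (nat \<times> nat) set" where
  "Pinv r f = {(i, j). i \<in> {1..r} \<and> j \<in> {1..r} \<and> i < j \<and> f j < f i}"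

definition invs :: "nat \<Rightarrow> (nat \<Rightarrow> nat) \<Rightarrow> nat" where
  "invs r f = card (Pinv r f)"

lemma Pinv_finite: "finite (Pinv r f)"
proof -
  have "Pinv r f \<subseteq> {1..r} \<times> {1..r}" unfolding Pinv_def by auto
  then show ?thesis using finite_subset by blast
qed

lemma fold_stp: fixes g :: "nat \<Rightarrow> nat" shows "fold (\<lambda>t acc. stp t \<circ> acc) ts g = fold (\<lambda>t acc. stp t \<circ> acc) ts id \<circ> g"
proof (induction ts arbitrary: g)
  case Nil then show ?case by simp
next
  case (Cons t ts)
  have e1: "fold (\<lambda>t acc. stp t \<circ> acc) (t # ts) g = fold (\<lambda>t acc. stp t \<circ> acc) ts id \<circ> (stp t \<circ> g)"
    by (metis Cons fold_simps(2))
  have e2: "fold (\<lambda>t acc. stp t \<circ> acc) (t # ts) id = fold (\<lambda>t acc. stp t \<circ> acc) ts id \<circ> stp t"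
    by (metis Cons comp_id fold_simps(2))
  show ?case by (simp only: e1 e2 comp_assoc)
qed

lemma wordprod_Cons: "wordprod (t # ts) = wordprod ts \<circ> stp t"
  unfolding wordprod_def using fold_stp[of ts "stp t"] by simp

lemma stp_stp: "stp t (stp t i) = i" unfolding stp_def by auto

lemma stp_range: "1 \<le> t \<Longrightarrow> t < r \<Longrightarrow> i \<in> {1..r} \<Longrightarrow> stp t i \<in> {1..r}"
  unfolding stp_def by auto

lemma stp_mono: "1 \<le> t \<Longrightarrow> i < j \<Longrightarrow> (i, j) \<noteq> (t, Suc t) \<Longrightarrow> stp t i < stp t j"
  unfolding stp_def by auto

lemma Pinv_sub: fixes f :: "nat \<Rightarrow> nat" assumes t: "1 \<le> t" "t < r"
  shows "Pinv r (f \<circ> stp t) \<subseteq> insert (t, Suc t) ((\<lambda>(i, j). (stp t i, stp t j)) ` Pinv r f)"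
proof
  fix p assume p: "p \<in> Pinv r (f \<circ> stp t)"
  obtain i j where ij: "p = (i, j)" by (cases p)
  show "p \<in> insert (t, Suc t) ((\<lambda>(i, j). (stp t i, stp t j)) ` Pinv r f)"
  proof (cases "p = (t, Suc t)")
    case True then show ?thesis by simp
  next
    case False
    have h: "i \<in> {1..r}" "j \<in> {1..r}" "i < j" "f (stp t j) < f (stp t i)" using p ij unfolding Pinv_def by auto
    have "(stp t i, stp t j) \<in> Pinv r f"
      unfolding Pinv_def using h stp_range[OF t] stp_mono[OF t(1) h(3)] False ij by auto
    moreover have "p = (\<lambda>(i, j). (stp t i, stp t j)) (stp t i, stp t j)" using ij stp_stp by simp
    ultimately show ?thesis by blast
  qed
qed

lemma invs_le: fixes f :: "nat \<Rightarrow> nat" assumes t: "1 \<le> t" "t < r" shows "invs r (f \<circ> stp t) \<le> Suc (invs r f)"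
proof -
  have "invs r (f \<circ> stp t) \<le> card (insert (t, Suc t) ((\<lambda>(i, j). (stp t i, stp t j)) ` Pinv r f))"
    unfolding invs_def using Pinv_sub[OF t] Pinv_finite by (intro card_mono) auto
  also have "\<dots> \<le> Suc (card ((\<lambda>(i, j). (stp t i, stp t j)) ` Pinv r f))"
    by (rule card_insert_le_m1) (auto simp: Pinv_finite)
  also have "\<dots> \<le> Suc (invs r f)" unfolding invs_def using card_image_le Pinv_finite by auto
  finally show ?thesis .
qed

lemma invs_ge: fixes f :: "nat \<Rightarrow> nat" assumes t: "1 \<le> t" "t < r" and lt: "f t < f (Suc t)"
  shows "Suc (invs r f) \<le> invs r (f \<circ> stp t)"
proof -
  let ?g = "\<lambda>(i, j). (stp t i, stp t j)"
  have inj: "inj_on ?g (Pinv r f)"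
  proof (rule inj_onI)
    fix p q assume "?g p = ?g q"
    then have "stp t (fst p) = stp t (fst q)" "stp t (snd p) = stp t (snd q)" by (auto simp: case_prod_beta)
    then have "fst p = fst q" "snd p = snd q" by (metis stp_stp)+
    then show "p = q" by (simp add: prod_eq_iff)
  qed
  have sub: "insert (t, Suc t) (?g ` Pinv r f) \<subseteq> Pinv r (f \<circ> stp t)"
  proof
    fix p assume "p \<in> insert (t, Suc t) (?g ` Pinv r f)"
    then consider "p = (t, Suc t)" | q where "q \<in> Pinv r f" "p = ?g q" by blast
    then show "p \<in> Pinv r (f \<circ> stp t)"
    proof cases
      case 1 then show ?thesis using t lt unfolding Pinv_def stp_def by auto
    next
      case 2
      obtain i j where ij: "q = (i, j)" by (cases q)
      have h: "i \<in> {1..r}" "j \<in> {1..r}" "i < j" "f j < f i" using 2 ij unfolding Pinv_def by auto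
      have ne: "(i, j) \<noteq> (t, Suc t)" using h lt by auto
      show ?thesis using 2 ij h stp_range[OF t] stp_mono[OF t(1) h(3) ne] stp_stp
        unfolding Pinv_def by auto
    qed
  qed
  have nin: "(t, Suc t) \<notin> ?g ` Pinv r f"
  proof
    assume "(t, Suc t) \<in> ?g ` Pinv r f"
    then obtain i j where "(i, j) \<in> Pinv r f" "stp t i = t" "stp t j = Suc t" by auto
    then have a: "i < j" "stp t (stp t i) = stp t t" "stp t (stp t j) = stp t (Suc t)" unfolding Pinv_def by auto
    have "stp t t = Suc t" "stp t (Suc t) = t" unfolding stp_def by auto
    then have "i = Suc t" "j = t" using a stp_stp by simp_all
    then show False using a by simp
  qed
  have "Suc (invs r f) = card (insert (t, Suc t) (?g ` Pinv r f))"
    unfolding invs_def using nin card_image[OF inj] Pinv_finite by simp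
  also have "\<dots> \<le> invs r (f \<circ> stp t)" unfolding invs_def by (rule card_mono[OF Pinv_finite sub])
  finally show ?thesis .
qed

lemma invs_wordprod: "set us \<subseteq> {1..r - 1} \<Longrightarrow> invs r (wordprod us) \<le> length us"
proof (induction us)
  case Nil
  have "Pinv r (wordprod []) = {}" unfolding Pinv_def wordprod_def by auto
  then show ?case unfolding invs_def by simp
next
  case (Cons u us)
  have u: "1 \<le> u" "u < r" using Cons.prems by auto
  have "invs r (wordprod (u # us)) \<le> Suc (invs r (wordprod us))"
    unfolding wordprod_Cons using invs_le[OF u] by simp
  then show ?case using Cons by simp
qed



context
  fixes d n :: nat
  assumes dn: "1 \<le> d" "d < n"
begin

lemma main_ind: "set ts \<subseteq> {1..d * (n - d) - 1} \<Longrightarrow> Fs d n ts (Some (Cright d n)) = Some C \<Longrightarrow>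
  maxchain d n C \<and> (\<forall>u\<in>{1..d * (n - d)}. opof d n C u = opof d n (Cright d n) (wordprod ts u))
  \<and> (\<forall>u\<in>{1..d * (n - d)}. wordprod ts u \<in> {1..d * (n - d)})
  \<and> (\<forall>u. u \<notin> {1..d * (n - d)} \<longrightarrow> wordprod ts u = u)
  \<and> length ts \<le> invs (d * (n - d)) (wordprod ts)"
proof (induction ts arbitrary: C)
  case Nil
  then have "C = Cright d n" unfolding Fs_def by simp
  then show ?case using Cr_mc[OF dn] unfolding wordprod_def by simp
next
  case (Cons t ts)
  let ?r = "d * (n - d)"
  have t: "1 \<le> t" "t < ?r" using Cons.prems(1) by auto
  obtain C0 where C0: "Fs d n ts (Some (Cright d n)) = Some C0"
    using Cons.prems(2) unfolding Fs_def by (cases "foldr (Fop d n) ts (Some (Cright d n))") (auto simp: Fop_def)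
  have F: "Fop d n t (Some C0) = Some C" using Cons.prems(2) C0 unfolding Fs_def by simp
  have IH: "maxchain d n C0" "\<forall>u\<in>{1..?r}. opof d n C0 u = opof d n (Cright d n) (wordprod ts u)"
    "\<forall>u\<in>{1..?r}. wordprod ts u \<in> {1..?r}" "\<forall>u. u \<notin> {1..?r} \<longrightarrow> wordprod ts u = u"
    "length ts \<le> invs ?r (wordprod ts)"
    using Cons.IH[OF _ C0] Cons.prems(1) by auto
  define w where "w = wordprod ts"
  have st: "1 \<le> t \<and> Suc t < length C0 \<and> maxchain d n C \<and> opof d n C t = opof d n C0 (Suc t)
    \<and> opof d n C (Suc t) = opof d n C0 t \<and> (\<forall>u. u \<noteq> t \<longrightarrow> u \<noteq> Suc t \<longrightarrow> opof d n C u = opof d n C0 u)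
    \<and> snd (opof d n C0 (Suc t)) < snd (opof d n C0 t)" using Fop_step[OF IH(1) F] .
  have wp: "wordprod (t # ts) = w \<circ> stp t" unfolding w_def by (rule wordprod_Cons)
  have oC: "\<forall>u. opof d n C u = opof d n C0 (stp t u)"
  proof
    fix u show "opof d n C u = opof d n C0 (stp t u)"
      using st unfolding stp_def by (cases "u = t"; cases "u = Suc t") auto
  qed
  have A: "\<forall>u\<in>{1..?r}. opof d n C u = opof d n (Cright d n) (wordprod (t # ts) u)"
    using oC IH(2) stp_range[OF t] unfolding wp w_def by auto
  have B: "\<forall>u\<in>{1..?r}. wordprod (t # ts) u \<in> {1..?r}"
    using IH(3) stp_range[OF t] unfolding wp w_def by auto
  have Cc: "\<forall>u. u \<notin> {1..?r} \<longrightarrow> wordprod (t # ts) u = u"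
  proof (intro allI impI)
    fix u assume u: "u \<notin> {1..?r}"
    then have "stp t u = u" using t unfolding stp_def by auto
    then show "wordprod (t # ts) u = u" using IH(4) u unfolding wp w_def by simp
  qed
  have tr: "t \<in> {1..?r}" "Suc t \<in> {1..?r}" using t by auto
  have wlt: "w t < w (Suc t)"
  proof (rule ccontr)
    assume "\<not> w t < w (Suc t)"
    then have le: "w (Suc t) \<le> w t" by simp
    have r1: "w t \<in> {1..?r}" "w (Suc t) \<in> {1..?r}" using IH(3) tr unfolding w_def by auto
    have "snd (opof d n (Cright d n) (w t)) \<le> snd (opof d n (Cright d n) (w (Suc t)))"
      using Cr_mono[OF dn, of "w (Suc t)" "w t"] r1 le by simp
    then have "snd (opof d n C0 t) \<le> snd (opof d n C0 (Suc t))" using IH(2) tr unfolding w_def by simp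
    then show False using st by simp
  qed
  have "Suc (invs ?r w) \<le> invs ?r (w \<circ> stp t)" using invs_ge[OF t wlt] .
  then have D: "length (t # ts) \<le> invs ?r (wordprod (t # ts))" using IH(5) unfolding wp w_def by simp
  show ?case using st A B Cc D by blast
qed

end

theorem proposition2p27:
  fixes d n :: nat and ts :: "nat list" and C :: "nat list list"
  assumes "1 \<le> d" and "d < n"
    and "\<forall>t\<in>set ts. 1 \<le> t \<and> t \<le> d * (n - d) - 1"
    and "Fs d n ts (Some (Cright d n)) = Some C"
    and "maxchain d n C"
  shows "sigma d n C = wordprod ts \<and> reduced (d * (n - d)) ts"
proof -
  let ?r = "d * (n - d)"
  have dn: "1 \<le> d" "d < n" using assms by auto
  have sts: "set ts \<subseteq> {1..?r - 1}" using assms(3) by auto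
  have M: "maxchain d n C \<and> (\<forall>u\<in>{1..?r}. opof d n C u = opof d n (Cright d n) (wordprod ts u))
    \<and> (\<forall>u\<in>{1..?r}. wordprod ts u \<in> {1..?r})
    \<and> (\<forall>u. u \<notin> {1..?r} \<longrightarrow> wordprod ts u = u)
    \<and> length ts \<le> invs ?r (wordprod ts)" using main_ind[OF dn sts assms(4)] .
  have sig: "sigma d n C = wordprod ts"
  proof
    fix u
    show "sigma d n C u = wordprod ts u"
    proof (cases "u \<in> {1..?r}")
      case True
      have "(THE v. v \<in> {1..?r} \<and> opof d n (Cright d n) v = opof d n C u) = wordprod ts u"
      proof (rule the_equality)
        show "wordprod ts u \<in> {1..?r} \<and> opof d n (Cright d n) (wordprod ts u) = opof d n C u"
          using M True by simp
      next
        fix v assume v: "v \<in> {1..?r} \<and> opof d n (Cright d n) v = opof d n C u"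
        show "v = wordprod ts u" using Cr_inj[OF dn, of v "wordprod ts u"] v M True by simp
      qed
      then show ?thesis unfolding sigma_def using True by simp
    next
      case False
      then have "sigma d n C u = u" unfolding sigma_def by (simp only: if_False)
      then show ?thesis using M False by simp
    qed
  qed
  have "reduced ?r ts"
    unfolding reduced_def
  proof (intro conjI allI impI)
    show "set ts \<subseteq> {1..?r - 1}" by (rule sts)
    fix us assume us: "set us \<subseteq> {1..?r - 1} \<and> wordprod us = wordprod ts"
    have "invs ?r (wordprod us) \<le> length us" using invs_wordprod us by blast
    then show "length ts \<le> length us" using M us by simp
  qed
  then show ?thesis using sig by simp
qed


end
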